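(* Let $(M,d)$ be a metric space, $\mathsf{P}\subseteq M$ a set of $n$ points, $1\le\ell\le k\le n$ integers, $m=\lfloor k/\ell\rfloor$, $c\ge1$. Let $Q=\{q_1,\dots,q_m\}\subseteq\mathsf{P}$ satisfy $\max_{p\in\mathsf{P}} d_Q(p,1)\le c\,r_{\mathrm{cen}}$, where $r_{\mathrm{cen}}=\min_{S\subseteq\mathsf{P},|S|=m}\max_{p\in\mathsf{P}} d_S(p,1)$. Let $C\subseteq\mathsf{P}$ with $|C|=k$ and $C\supseteq\bigcup_{i=1}^m N_{\mathsf{P}}(q_i,\ell)$, and let $r_{\mathrm{alg}}=\max_{p\in\mathsf{P}} d_C(p,\ell)$, $r_{\mathrm{opt}}=\min_{C'\subseteq\mathsf{P},|C'|=k}\max_{p\in\mathsf{P}} d_{C'}(p,\ell)$. Then $r_{\mathrm{alg}}\le r_{\mathrm{opt}}+2c\,r_{\mathrm{cen}}$.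
   Context: For a finite set $S\subseteq M$, a point $p\in M$ and an integer $1\le i\le|S|$, $d_S(p,i)$ denotes the radius of the smallest closed ball centered at $p$ containing at least $i$ points of $S$. Nearest neighbors are ordered lexicographically by $(d(p,s),\text{index of }s)$; $N_S(p,i)$ is the set of the first $i$ points of $S$ in this order, $|N_S(p,i)|=i$. *)

theory Defs
  imports "HOL-Analysis.Analysis"
begin

definition kdist :: "'a::metric_space set \<Rightarrow> 'a \<Rightarrow> nat \<Rightarrow> real" where
  "kdist S p i = Inf {r. 0 \<le> r \<and> i \<le> card {s \<in> S. dist p s \<le> r}}"

definition nn_less :: "('a \<Rightarrow> nat) \<Rightarrow> 'a::metric_space \<Rightarrow> 'a \<Rightarrow> 'a \<Rightarrow> bool" where
  "nn_less idx p t s \<longleftrightarrow> dist p t < dist p s \<or> (dist p t = dist p s \<and> idx t < idx s)"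

definition knn :: "('a \<Rightarrow> nat) \<Rightarrow> 'a::metric_space set \<Rightarrow> 'a \<Rightarrow> nat \<Rightarrow> 'a set" where
  "knn idx S p i = {s \<in> S. card {t \<in> S. nn_less idx p t s} < i}"

definition cost :: "'a::metric_space set \<Rightarrow> 'a set \<Rightarrow> nat \<Rightarrow> real" where
  "cost P S i = Max ((\<lambda>p. kdist S p i) ` P)"

definition opt_cost :: "'a::metric_space set \<Rightarrow> nat \<Rightarrow> nat \<Rightarrow> real" where
  "opt_cost P j i = Min ((\<lambda>S. cost P S i) ` {S. S \<subseteq> P \<and> card S = j})"

end

theory Submission
  imports Defs
begin

lemma kdist_attained:
  assumes fin: "finite S" and ic: "i \<le> card S"
  shows "0 \<le> kdist S p i \<and> i \<le> card {s\<in>S. dist p s \<le> kdist S p i}"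
proof -
  define R where "R = {r. 0 \<le> r \<and> i \<le> card {s\<in>S. dist p s \<le> r}}"
  define F where "F = insert 0 (dist p ` S)"
  have finF: "finite F" using fin by (simp add: F_def)
  have red: "\<exists>r'\<in>R \<inter> F. r' \<le> r" if "r \<in> R" for r
  proof -
    define r' where "r' = Max (insert 0 {d\<in>dist p ` S. d \<le> r})"
    have fr: "finite (insert 0 {d\<in>dist p ` S. d \<le> r})" using fin by simp
    have r0: "0 \<le> r" using that by (simp add: R_def)
    have le: "r' \<le> r" unfolding r'_def using fr r0 by (subst Max_le_iff) auto
    have "{s\<in>S. dist p s \<le> r'} = {s\<in>S. dist p s \<le> r}"
    proof
      show "{s\<in>S. dist p s \<le> r'} \<subseteq> {s\<in>S. dist p s \<le> r}" using le by auto
      show "{s\<in>S. dist p s \<le> r} \<subseteq> {s\<in>S. dist p s \<le> r'}"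
        unfolding r'_def using fr by (auto intro!: Max_ge)
    qed
    moreover have "0 \<le> r'" unfolding r'_def using fr by (auto intro: Max_ge)
    moreover have "r' \<in> F"
    proof -
      have "r' \<in> insert 0 {d\<in>dist p ` S. d \<le> r}" unfolding r'_def using fr by (rule Max_in) simp
      thus ?thesis by (auto simp: F_def)
    qed
    ultimately show ?thesis using that le by (auto simp: R_def)
  qed
  have mf: "Max F \<in> R"
  proof -
    have "{s\<in>S. dist p s \<le> Max F} = S" using finF by (auto simp: F_def intro: Max_ge)
    moreover have "0 \<le> Max F" using finF by (auto simp: F_def intro: Max_ge)
    ultimately show ?thesis using ic by (simp add: R_def)
  qed
  obtain r1 where r1: "r1 \<in> R \<inter> F" using red[OF mf] by blast
  define r0 where "r0 = Min (R \<inter> F)"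
  have r0in: "r0 \<in> R \<inter> F" unfolding r0_def using finF r1 by (intro Min_in) auto
  have r0le: "r0 \<le> r" if rR: "r \<in> R" for r
  proof -
    obtain r' where "r' \<in> R \<inter> F" "r' \<le> r" using red[OF rR] by blast
    moreover have "r0 \<le> r'" unfolding r0_def using finF \<open>r' \<in> R \<inter> F\<close> by (intro Min_le) auto
    ultimately show ?thesis by simp
  qed
  have "kdist S p i = r0" unfolding kdist_def R_def[symmetric]
    using r0in r0le by (intro cInf_eq_minimum) auto
  thus ?thesis using r0in by (simp add: R_def)
qed

lemma kdist_le:
  assumes "finite S" "0 \<le> r" "i \<le> card {s\<in>S. dist p s \<le> r}"
  shows "kdist S p i \<le> r"
  unfolding kdist_def using assms by (intro cInf_lower) (auto intro: bdd_belowI[of _ 0])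

lemma kdist_mono:
  assumes "finite P" "S \<subseteq> P" "i \<le> card S"
  shows "kdist P p i \<le> kdist S p i"
proof -
  have fS: "finite S" using assms finite_subset by blast
  from kdist_attained[OF fS assms(3)] have a: "0 \<le> kdist S p i" "i \<le> card {s\<in>S. dist p s \<le> kdist S p i}" by auto
  have "card {s\<in>S. dist p s \<le> kdist S p i} \<le> card {s\<in>P. dist p s \<le> kdist S p i}"
    using assms by (intro card_mono) auto
  thus ?thesis using a assms(1) by (intro kdist_le) auto
qed

lemma knn_card:
  fixes idx :: "'a::metric_space \<Rightarrow> nat"
  assumes fin: "finite P" and inj: "inj_on idx P" and l: "l \<le> card P"
  shows "card (knn idx P q l) = l"
proof -
  define rk where "rk s = card {t\<in>P. nn_less idx q t s}" for s
  have trans: "nn_less idx q a c" if "nn_less idx q a b" "nn_less idx q b c" for a b c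
    using that unfolding nn_less_def by auto
  have irr: "\<not> nn_less idx q a a" for a unfolding nn_less_def by auto
  have tot: "nn_less idx q s t \<or> nn_less idx q t s" if "s \<in> P" "t \<in> P" "s \<noteq> t" for s t
    proof -
    have "idx s \<noteq> idx t" using that inj unfolding inj_on_def by blast
    thus ?thesis unfolding nn_less_def by linarith
  qed
  have lt: "rk s < rk t" if "s \<in> P" "t \<in> P" "nn_less idx q s t" for s t
  proof -
    have "{u\<in>P. nn_less idx q u s} \<subset> {u\<in>P. nn_less idx q u t}"
    proof
      show "{u\<in>P. nn_less idx q u s} \<subseteq> {u\<in>P. nn_less idx q u t}" using that trans by blast
      have "s \<in> {u\<in>P. nn_less idx q u t}" "s \<notin> {u\<in>P. nn_less idx q u s}" using that irr by auto
      thus "{u\<in>P. nn_less idx q u s} \<noteq> {u\<in>P. nn_less idx q u t}" by blast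
    qed
    thus ?thesis unfolding rk_def using fin by (intro psubset_card_mono) auto
  qed
  have injr: "inj_on rk P"
  proof (rule inj_onI)
    fix s t assume st: "s \<in> P" "t \<in> P" "rk s = rk t"
    show "s = t"
    proof (rule ccontr)
      assume "s \<noteq> t"
      from tot[OF st(1,2) this] show False using lt st by (metis less_irrefl)
    qed
  qed
  have rng: "rk ` P \<subseteq> {0..<card P}"
  proof
    fix x assume "x \<in> rk ` P"
    then obtain s where s: "s \<in> P" "x = rk s" by auto
    have "{t\<in>P. nn_less idx q t s} \<subset> P" using s irr by blast
    hence "rk s < card P" unfolding rk_def using fin by (intro psubset_card_mono) auto
    thus "x \<in> {0..<card P}" using s by simp
  qed
  have img: "rk ` P = {0..<card P}"
    using rng card_image[OF injr] by (intro card_subset_eq) auto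
  have "knn idx P q l = {s\<in>P. rk s < l}" unfolding knn_def rk_def by simp
  moreover have im: "rk ` {s\<in>P. rk s < l} = {0..<l}"
  proof
    show "rk ` {s\<in>P. rk s < l} \<subseteq> {0..<l}" by auto
    show "{0..<l} \<subseteq> rk ` {s\<in>P. rk s < l}"
    proof
      fix x assume x: "x \<in> {0..<l}"
      hence "x \<in> rk ` P" using img l by auto
      then obtain s where "s \<in> P" "x = rk s" by blast
      thus "x \<in> rk ` {s\<in>P. rk s < l}" using x by auto
    qed
  qed
  moreover have ii: "inj_on rk {s\<in>P. rk s < l}" using injr by (rule inj_on_subset) auto
  ultimately have "card (knn idx P q l) = card {0..<l}" using card_image[OF ii] im by argo
  thus ?thesis by simp
qed

lemma knn_close:
  assumes fin: "finite P" and "s \<in> knn idx P q l" and "l \<le> card P"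
  shows "dist q s \<le> kdist P q l"
proof (rule ccontr)
  assume "\<not> ?thesis"
  hence "{t\<in>P. dist q t \<le> kdist P q l} \<subseteq> {t\<in>P. nn_less idx q t s}"
    unfolding nn_less_def by auto
  hence "card {t\<in>P. dist q t \<le> kdist P q l} \<le> card {t\<in>P. nn_less idx q t s}"
    using fin by (intro card_mono) auto
  moreover have "card {t\<in>P. nn_less idx q t s} < l" using assms(2) by (simp add: knn_def)
  moreover have "l \<le> card {t\<in>P. dist q t \<le> kdist P q l}" using kdist_attained[OF fin assms(3)] by simp
  ultimately show False by simp
qed

theorem claim3:
  fixes P Q C :: "'a::metric_space set" and idx :: "'a \<Rightarrow> nat"
    and n k l m :: nat and c :: real
  assumes "finite P" "card P = n" "inj_on idx P"
    and "1 \<le> l" "l \<le> k" "k \<le> n"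
    and "m = k div l" "c \<ge> 1"
    and "Q \<subseteq> P" "card Q = m"
    and "cost P Q 1 \<le> c * opt_cost P m 1"
    and "C \<subseteq> P" "card C = k"
    and "(\<Union>q\<in>Q. knn idx P q l) \<subseteq> C"
  shows "cost P C l \<le> opt_cost P k l + 2 * c * opt_cost P m 1"
proof -
  note fin = assms(1)
  have m1: "1 \<le> m" using assms(4,5,7) by (metis div_le_mono div_self not_one_le_zero)
  have Pne: "P \<noteq> {}" using assms(2,4,5,6) by auto
  have finQ: "finite Q" and finC: "finite C" using assms(9,12) fin finite_subset by auto
  have finPow: "finite {S. S \<subseteq> P \<and> card S = j}" for j using fin by simp
  obtain S0 where S0: "S0 \<subseteq> P" "card S0 = k" using assms(2,6) obtain_subset_with_card_n by metis
  obtain Cs where Cs: "Cs \<subseteq> P" "card Cs = k" "opt_cost P k l = cost P Cs l"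
  proof -
    have "opt_cost P k l \<in> (\<lambda>S. cost P S l) ` {S. S \<subseteq> P \<and> card S = k}"
      unfolding opt_cost_def using finPow S0 by (intro Min_in) auto
    thus ?thesis using that by auto
  qed
  obtain Sm where Sm: "Sm \<subseteq> P" "card Sm = m" "opt_cost P m 1 = cost P Sm 1"
  proof -
    have "opt_cost P m 1 \<in> (\<lambda>S. cost P S 1) ` {S. S \<subseteq> P \<and> card S = m}"
      unfolding opt_cost_def using finPow assms(9,10) by (intro Min_in) auto
    thus ?thesis using that by auto
  qed
  have costge: "kdist S p i \<le> cost P S i" if "p \<in> P" for S p i
    unfolding cost_def using fin that by (intro Max_ge) auto
  have oc1: "0 \<le> opt_cost P m 1"
  proof -
    obtain p where "p \<in> P" using Pne by auto
    have "finite Sm" using Sm fin finite_subset by auto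
    hence "0 \<le> kdist Sm p 1" using kdist_attained[of Sm 1 p] Sm m1 by auto
    thus ?thesis using Sm costge[OF \<open>p \<in> P\<close>] by (metis order_trans)
  qed
  have bound: "kdist C p l \<le> opt_cost P k l + 2 * c * opt_cost P m 1" if p: "p \<in> P" for p
  proof -
    have "0 \<le> kdist Q p 1 \<and> 1 \<le> card {s\<in>Q. dist p s \<le> kdist Q p 1}"
      using kdist_attained[OF finQ, of 1 p] assms(10) m1 by auto
    then obtain q where q: "q \<in> Q" "dist p q \<le> kdist Q p 1"
      by (metis (no_types, lifting) card.empty empty_Collect_eq not_one_le_zero)
    have dq: "dist p q \<le> c * opt_cost P m 1" using q costge[OF p, of Q 1] assms(11) by linarith
    have qP: "q \<in> P" using q assms(9) by auto
    have lP: "l \<le> card P" using assms by simp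
    define r where "r = kdist P q l"
    have r0: "0 \<le> r" using kdist_attained[OF fin lP] r_def by simp
    have "r \<le> kdist Cs q l" unfolding r_def using kdist_mono[OF fin Cs(1)] Cs(2) assms(5) by simp
    also have "\<dots> \<le> opt_cost P k l" using Cs(3) costge[OF qP] by simp
    finally have rle: "r \<le> opt_cost P k l" .
    have "knn idx P q l \<subseteq> {s\<in>C. dist p s \<le> dist p q + r}"
    proof
      fix s assume s: "s \<in> knn idx P q l"
      have "s \<in> C" using s q assms(14) by auto
      moreover have "dist q s \<le> r" using knn_close[OF fin s lP] r_def by simp
      moreover have "dist p s \<le> dist p q + dist q s" by (rule dist_triangle)
      ultimately show "s \<in> {s\<in>C. dist p s \<le> dist p q + r}" by auto
    qed
    hence "card (knn idx P q l) \<le> card {s\<in>C. dist p s \<le> dist p q + r}"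
      using finC by (intro card_mono) auto
    hence "l \<le> card {s\<in>C. dist p s \<le> dist p q + r}"
      using knn_card[OF fin assms(3) lP, of q] by simp
    hence "kdist C p l \<le> dist p q + r" using finC r0 by (intro kdist_le) auto
    moreover have "0 \<le> c * opt_cost P m 1" using oc1 assms(8) by simp
    ultimately show ?thesis using dq rle by linarith
  qed
  show ?thesis unfolding cost_def using fin Pne bound by (subst Max_le_iff) auto
qed

end
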